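(* Let $s\colon A\to X$ and $t\colon A\to Y$ be isometries in a pre-Hilbert $*$-category, and let $s^\perp\colon X\ominus A\to X$ and $t^\perp\colon Y\ominus A\to Y$ be isometric orthogonal complements of $s$ and $t$. Then the square \[ \begin{bmatrix} s^{\perp *}\\ s^*\\ 0\end{bmatrix} s = \begin{bmatrix} 0\\ t^*\\ t^{\perp *}\end{bmatrix} t \] with legs $\begin{bmatrix} s^{\perp *}\\ s^*\\ 0\end{bmatrix}\colon X\to (X\ominus A)\oplus A\oplus (Y\ominus A)$ and $\begin{bmatrix} 0\\ t^*\\ t^{\perp *}\end{bmatrix}\colon Y\to (X\ominus A)\oplus A\oplus (Y\ominus A)$ is a pushout square, and the cospan formed by these two morphisms is a codilator of $ts^*\colon X\to Y$.
   Context: A $*$-category is a category with a choice of $f^*\colon Y\to X$ for each $f\colon X\to Y$ such that $1^*=1$, $(gf)^*=f^*g^*$, $(f^* )^*=f$; $f$ is an isometry if $f^*f=1$. A pre-Hilbert $*$-category is a $*$-category with (R1) a zero object, (R2) orthonormal biproducts of all pairs (and hence all finite families) of objects, i.e. biproducts with projections equal to the adjoints of the injections (column matrices denote maps into such biproducts), (R3) an isometric kernel for every morphism, and (R4) every diagonal $\Delta\colon X\to X\oplus X$ a kernel of some morphism. An isometric orthogonal complement of a monomorphism $s\colon A\to X$ is an isometric kernel $s^\perp\colon X\ominus A\to X$ of $s^*$. A codilation of $f\colon X\to Y$ is a cospan $(T,t_1,t_2)$ with $t_1\colon X\to T$, $t_2\colon Y\to T$ isometries and $t_2^*t_1=f$.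 A codilator of $f$ is a codilation $(S,s_1,s_2)$ such that for every codilation $(T,t_1,t_2)$ of $f$ there is a unique isometry $t\colon S\to T$ with $ts_1=t_1$ and $ts_2=t_2$. *)

theory Defs
  imports Main
begin

text \<open>Objects are all
elements of type 'o, morphisms all elements of type 'm.  Cmp C g f is the
composite g o f (meaningful when Cod f = Dom g); Adj C f is f^*.\<close>

record ('o, 'm) scat =
  Dom :: "'m \<Rightarrow> 'o"
  Cod :: "'m \<Rightarrow> 'o"
  Id  :: "'o \<Rightarrow> 'm"
  Cmp :: "'m \<Rightarrow> 'm \<Rightarrow> 'm"
  Adj :: "'m \<Rightarrow> 'm"

definition hom :: "('o, 'm, 'x) scat_scheme \<Rightarrow> 'o \<Rightarrow> 'o \<Rightarrow> 'm set" where
  "hom C X Y = {f. Dom C f = X \<and> Cod C f = Y}"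

definition category :: "('o, 'm, 'x) scat_scheme \<Rightarrow> bool" where
  "category C \<longleftrightarrow>
     (\<forall>X. Id C X \<in> hom C X X) \<and>
     (\<forall>f g. Cod C f = Dom C g \<longrightarrow>
        Dom C (Cmp C g f) = Dom C f \<and> Cod C (Cmp C g f) = Cod C g) \<and>
     (\<forall>f g h. Cod C f = Dom C g \<and> Cod C g = Dom C h \<longrightarrow>
        Cmp C h (Cmp C g f) = Cmp C (Cmp C h g) f) \<and>
     (\<forall>f. Cmp C f (Id C (Dom C f)) = f \<and> Cmp C (Id C (Cod C f)) f = f)"

definition star_category :: "('o, 'm, 'x) scat_scheme \<Rightarrow> bool" where
  "star_category C \<longleftrightarrow> category C \<and>
     (\<forall>f. Adj C f \<in> hom C (Cod C f) (Dom C f)) \<and>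
     (\<forall>X. Adj C (Id C X) = Id C X) \<and>
     (\<forall>f g. Cod C f = Dom C g \<longrightarrow> Adj C (Cmp C g f) = Cmp C (Adj C f) (Adj C g)) \<and>
     (\<forall>f. Adj C (Adj C f) = f)"

definition isometry :: "('o, 'm, 'x) scat_scheme \<Rightarrow> 'm \<Rightarrow> bool" where
  "isometry C f \<longleftrightarrow> Cmp C (Adj C f) f = Id C (Dom C f)"

definition zero_obj :: "('o, 'm, 'x) scat_scheme \<Rightarrow> 'o \<Rightarrow> bool" where
  "zero_obj C Z \<longleftrightarrow> (\<forall>X. (\<exists>!f. f \<in> hom C X Z) \<and> (\<exists>!f. f \<in> hom C Z X))"

definition zero_mor :: "('o, 'm, 'x) scat_scheme \<Rightarrow> 'm \<Rightarrow> bool" where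
  "zero_mor C f \<longleftrightarrow> (\<exists>Z g h. zero_obj C Z \<and> g \<in> hom C (Dom C f) Z \<and>
      h \<in> hom C Z (Cod C f) \<and> f = Cmp C h g)"

definition orth_biproduct ::
  "('o, 'm, 'x) scat_scheme \<Rightarrow> 'i set \<Rightarrow> ('i \<Rightarrow> 'o) \<Rightarrow> 'o \<Rightarrow> ('i \<Rightarrow> 'm) \<Rightarrow> bool" where
  "orth_biproduct C I X B \<iota> \<longleftrightarrow>
     (\<forall>k\<in>I. \<iota> k \<in> hom C (X k) B \<and> isometry C (\<iota> k)) \<and>
     (\<forall>j\<in>I. \<forall>k\<in>I. j \<noteq> k \<longrightarrow> zero_mor C (Cmp C (Adj C (\<iota> j)) (\<iota> k))) \<and>
     (\<forall>W f. (\<forall>k\<in>I. f k \<in> hom C (X k) W) \<longrightarrow>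
        (\<exists>!h. h \<in> hom C B W \<and> (\<forall>k\<in>I. Cmp C h (\<iota> k) = f k))) \<and>
     (\<forall>W f. (\<forall>k\<in>I. f k \<in> hom C W (X k)) \<longrightarrow>
        (\<exists>!h. h \<in> hom C W B \<and> (\<forall>k\<in>I. Cmp C (Adj C (\<iota> k)) h = f k)))"

definition kernel :: "('o, 'm, 'x) scat_scheme \<Rightarrow> 'm \<Rightarrow> 'm \<Rightarrow> bool" where
  "kernel C k f \<longleftrightarrow> Cod C k = Dom C f \<and> zero_mor C (Cmp C f k) \<and>
     (\<forall>g. Cod C g = Dom C f \<longrightarrow> zero_mor C (Cmp C f g) \<longrightarrow>
        (\<exists>!h. Cod C h = Dom C k \<and> Cmp C k h = g))"

definition pre_hilbert_star_category :: "('o, 'm, 'x) scat_scheme \<Rightarrow> bool" where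
  "pre_hilbert_star_category C \<longleftrightarrow> star_category C \<and>
     (\<exists>Z. zero_obj C Z) \<and>
     (\<forall>X1 X2. \<exists>B \<iota>. orth_biproduct C {0::nat, 1} (\<lambda>k. if k = 0 then X1 else X2) B \<iota>) \<and>
     (\<forall>f. \<exists>k. kernel C k f \<and> isometry C k) \<and>
     (\<forall>X B (\<iota> :: nat \<Rightarrow> 'm) d. orth_biproduct C {0, 1} (\<lambda>_. X) B \<iota> \<longrightarrow>
        d \<in> hom C X B \<longrightarrow> Cmp C (Adj C (\<iota> 0)) d = Id C X \<longrightarrow>
        Cmp C (Adj C (\<iota> 1)) d = Id C X \<longrightarrow> (\<exists>g. kernel C d g))"

definition iso_orth_complement :: "('o, 'm, 'x) scat_scheme \<Rightarrow> 'm \<Rightarrow> 'm \<Rightarrow> bool" where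
  "iso_orth_complement C s sp \<longleftrightarrow> isometry C sp \<and> kernel C sp (Adj C s)"

definition pushout_square :: "('o, 'm, 'x) scat_scheme \<Rightarrow> 'm \<Rightarrow> 'm \<Rightarrow> 'm \<Rightarrow> 'm \<Rightarrow> bool" where
  "pushout_square C s t u v \<longleftrightarrow>
     Dom C s = Dom C t \<and> Cod C s = Dom C u \<and> Cod C t = Dom C v \<and> Cod C u = Cod C v \<and>
     Cmp C u s = Cmp C v t \<and>
     (\<forall>a b. Dom C a = Cod C s \<and> Dom C b = Cod C t \<and> Cod C a = Cod C b \<and>
        Cmp C a s = Cmp C b t \<longrightarrow>
        (\<exists>!h. h \<in> hom C (Cod C u) (Cod C a) \<and> Cmp C h u = a \<and> Cmp C h v = b))"

definition codilation :: "('o, 'm, 'x) scat_scheme \<Rightarrow> 'm \<Rightarrow> 'o \<Rightarrow> 'm \<Rightarrow> 'm \<Rightarrow> bool" where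
  "codilation C f T t1 t2 \<longleftrightarrow> t1 \<in> hom C (Dom C f) T \<and> t2 \<in> hom C (Cod C f) T \<and>
     isometry C t1 \<and> isometry C t2 \<and> Cmp C (Adj C t2) t1 = f"

definition codilator :: "('o, 'm, 'x) scat_scheme \<Rightarrow> 'm \<Rightarrow> 'o \<Rightarrow> 'm \<Rightarrow> 'm \<Rightarrow> bool" where
  "codilator C f S s1 s2 \<longleftrightarrow> codilation C f S s1 s2 \<and>
     (\<forall>T t1 t2. codilation C f T t1 t2 \<longrightarrow>
        (\<exists>!t. t \<in> hom C S T \<and> isometry C t \<and> Cmp C t s1 = t1 \<and> Cmp C t s2 = t2))"

end

theory Submission
  imports Defs
begin

locale phc =
  fixes C :: "('o, 'm) scat"
  assumes phc: "pre_hilbert_star_category C"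
begin

abbreviation cmp (infixr "\<cdot>" 55) where "g \<cdot> f \<equiv> Cmp C g f"
abbreviation adj where "adj f \<equiv> Adj C f"
abbreviation dom where "dom f \<equiv> Dom C f"
abbreviation cod where "cod f \<equiv> Cod C f"

lemma cat: "category C" using phc unfolding pre_hilbert_star_category_def star_category_def by blast
lemma star: "star_category C" using phc unfolding pre_hilbert_star_category_def by blast

lemma dom_cmp[simp]: "cod f = dom g \<Longrightarrow> dom (g \<cdot> f) = dom f"
  using cat unfolding category_def by blast
lemma cod_cmp[simp]: "cod f = dom g \<Longrightarrow> cod (g \<cdot> f) = cod g"
  using cat unfolding category_def by blast
lemma assoc[simp]: assumes "cod f = dom g" "cod g = dom h" shows "(h \<cdot> g) \<cdot> f = h \<cdot> (g \<cdot> f)"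
proof -
  from cat have "\<forall>f g h. cod f = dom g \<and> cod g = dom h \<longrightarrow> h \<cdot> (g \<cdot> f) = (h \<cdot> g) \<cdot> f"
    unfolding category_def by blast
  hence "h \<cdot> (g \<cdot> f) = (h \<cdot> g) \<cdot> f" using assms by blast
  thus ?thesis by (rule sym)
qed
lemma assoc': "cod f = dom g \<Longrightarrow> cod g = dom h \<Longrightarrow> h \<cdot> (g \<cdot> f) = (h \<cdot> g) \<cdot> f"
  by simp

lemma id_r[simp]: "f \<cdot> Id C (dom f) = f" using cat unfolding category_def by blast
lemma id_l[simp]: "Id C (cod f) \<cdot> f = f" using cat unfolding category_def by blast
lemma dom_id[simp]: "dom (Id C X) = X" using cat unfolding category_def hom_def by blast
lemma cod_id[simp]: "cod (Id C X) = X" using cat unfolding category_def hom_def by blast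
lemma id_r'[simp]: "dom f = X \<Longrightarrow> f \<cdot> Id C X = f" using id_r by blast
lemma id_l'[simp]: "cod f = X \<Longrightarrow> Id C X \<cdot> f = f" using id_l by blast
lemma dom_adj[simp]: "dom (adj f) = cod f" using star unfolding star_category_def hom_def by blast
lemma cod_adj[simp]: "cod (adj f) = dom f" using star unfolding star_category_def hom_def by blast
lemma adj_adj[simp]: "adj (adj f) = f" using star unfolding star_category_def by blast
lemma adj_id[simp]: "adj (Id C X) = Id C X" using star unfolding star_category_def by blast
lemma adj_cmp[simp]: "cod f = dom g \<Longrightarrow> adj (g \<cdot> f) = adj f \<cdot> adj g"
  using star unfolding star_category_def by blast
lemma adj_inj: "adj f = adj g \<Longrightarrow> f = g" by (metis adj_adj)

lemma iso_eq: "isometry C f \<Longrightarrow> adj f \<cdot> f = Id C (dom f)" unfolding isometry_def by simp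
lemma iso_cancel: assumes "isometry C f" "cod g = dom f" shows "adj f \<cdot> (f \<cdot> g) = g"
proof -
  have "adj f \<cdot> (f \<cdot> g) = (adj f \<cdot> f) \<cdot> g" using assms by simp
  also have "\<dots> = g" using assms by (simp add: iso_eq)
  finally show ?thesis .
qed

lemma hom_iff: "f \<in> hom C X Y \<longleftrightarrow> dom f = X \<and> cod f = Y" unfolding hom_def by simp

lemma zobj_to_unique: "zero_obj C Z \<Longrightarrow> x \<in> hom C X Z \<Longrightarrow> y \<in> hom C X Z \<Longrightarrow> x = y"
  unfolding zero_obj_def by blast
lemma zobj_from_unique: "zero_obj C Z \<Longrightarrow> x \<in> hom C Z X \<Longrightarrow> y \<in> hom C Z X \<Longrightarrow> x = y"
  unfolding zero_obj_def by blast
lemma zobj_to_ex: "zero_obj C Z \<Longrightarrow> \<exists>x. x \<in> hom C X Z"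
  unfolding zero_obj_def by blast
lemma zobj_from_ex: "zero_obj C Z \<Longrightarrow> \<exists>x. x \<in> hom C Z X"
  unfolding zero_obj_def by blast

lemma zero_unique:
  assumes "zero_mor C f" "zero_mor C g" "dom f = dom g" "cod f = cod g"
  shows "f = g"
proof -
  from assms(1) obtain Z a b where Z: "zero_obj C Z" "a \<in> hom C (dom f) Z" "b \<in> hom C Z (cod f)" and f: "f = b \<cdot> a"
    unfolding zero_mor_def by blast
  from assms(2) obtain Z' a' b' where Z': "zero_obj C Z'" "a' \<in> hom C (dom g) Z'" "b' \<in> hom C Z' (cod g)" and g: "g = b' \<cdot> a'"
    unfolding zero_mor_def by blast
  obtain i where i: "i \<in> hom C Z Z'" using zobj_from_ex[OF Z(1)] by blast
  have ia: "i \<cdot> a \<in> hom C (dom g) Z'" using i Z assms(3) by (simp add: hom_iff)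
  have 1: "a' = i \<cdot> a" using zobj_to_unique[OF Z'(1) Z'(2) ia] .
  have bi: "b' \<cdot> i \<in> hom C Z (cod f)" using i Z' assms by (simp add: hom_iff)
  have 2: "b = b' \<cdot> i" using zobj_from_unique[OF Z(1) Z(3) bi] .
  have "f = (b' \<cdot> i) \<cdot> a" using f 2 by simp
  also have "\<dots> = b' \<cdot> (i \<cdot> a)" using Z Z' i by (simp add: hom_iff)
  also have "\<dots> = g" using g 1 by simp
  finally show ?thesis .
qed

lemma zero_cmp_l: assumes "zero_mor C f" "cod f = dom g" shows "zero_mor C (g \<cdot> f)"
proof -
  from assms(1) obtain Z a b where Z: "zero_obj C Z" "a \<in> hom C (dom f) Z" "b \<in> hom C Z (cod f)" and f: "f = b \<cdot> a"
    unfolding zero_mor_def by blast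
  have c: "cod a = dom b" "cod b = dom g" using Z assms(2) by (auto simp: hom_iff)
  have e: "g \<cdot> f = (g \<cdot> b) \<cdot> a" unfolding f using c by simp
  have "g \<cdot> b \<in> hom C Z (cod (g \<cdot> f))" using Z assms(2) by (simp add: hom_iff)
  moreover have "a \<in> hom C (dom (g \<cdot> f)) Z" using Z assms(2) by (simp add: hom_iff)
  ultimately show ?thesis unfolding zero_mor_def using Z(1) e by blast
qed

lemma zero_cmp_r: assumes "zero_mor C f" "cod g = dom f" shows "zero_mor C (f \<cdot> g)"
proof -
  from assms(1) obtain Z a b where Z: "zero_obj C Z" "a \<in> hom C (dom f) Z" "b \<in> hom C Z (cod f)" and f: "f = b \<cdot> a"
    unfolding zero_mor_def by blast
  have c: "cod a = dom b" "cod g = dom a" using Z assms(2) by (auto simp: hom_iff)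
  have e: "f \<cdot> g = b \<cdot> (a \<cdot> g)" unfolding f using c by simp
  have "b \<in> hom C Z (cod (f \<cdot> g))" using Z assms(2) by (simp add: hom_iff)
  moreover have "a \<cdot> g \<in> hom C (dom (f \<cdot> g)) Z" using Z assms(2) by (simp add: hom_iff)
  ultimately show ?thesis unfolding zero_mor_def using Z(1) e by blast
qed

lemma zero_adj: assumes "zero_mor C f" shows "zero_mor C (adj f)"
proof -
  from assms(1) obtain Z a b where Z: "zero_obj C Z" "a \<in> hom C (dom f) Z" "b \<in> hom C Z (cod f)" and f: "f = b \<cdot> a"
    unfolding zero_mor_def by blast
  have c: "cod a = dom b" using Z by (auto simp: hom_iff)
  have e: "adj f = adj a \<cdot> adj b" unfolding f using c by simp
  have "adj b \<in> hom C (dom (adj f)) Z" "adj a \<in> hom C Z (cod (adj f))"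
    using Z by (simp_all add: hom_iff)
  thus ?thesis unfolding zero_mor_def using Z(1) e by blast
qed

lemma zero_adj_iff: "zero_mor C (adj f) \<longleftrightarrow> zero_mor C f"
  by (metis zero_adj adj_adj)

lemma zero_ex: "\<exists>f. zero_mor C f \<and> dom f = X \<and> cod f = Y"
proof -
  obtain Z where Z: "zero_obj C Z" using phc unfolding pre_hilbert_star_category_def by blast
  obtain a where a: "a \<in> hom C X Z" using zobj_to_ex[OF Z] by blast
  obtain b where b: "b \<in> hom C Z Y" using zobj_from_ex[OF Z] by blast
  have "zero_mor C (b \<cdot> a)" unfolding zero_mor_def using Z a b by (auto simp: hom_iff)
  thus ?thesis using a b by (auto simp: hom_iff)
qed

end

context phc
begin

lemma bp_inj:
  assumes "orth_biproduct C I F B \<iota>" "k \<in> I"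
  shows "dom (\<iota> k) = F k" "cod (\<iota> k) = B" "adj (\<iota> k) \<cdot> \<iota> k = Id C (F k)"
proof -
  have "\<forall>k\<in>I. \<iota> k \<in> hom C (F k) B \<and> isometry C (\<iota> k)"
    using assms(1) unfolding orth_biproduct_def by (elim conjE)
  hence "\<iota> k \<in> hom C (F k) B \<and> isometry C (\<iota> k)" using assms(2) by blast
  hence h: "dom (\<iota> k) = F k" "cod (\<iota> k) = B" "adj (\<iota> k) \<cdot> \<iota> k = Id C (dom (\<iota> k))"
    unfolding hom_iff isometry_def by blast+
  thus "dom (\<iota> k) = F k" "cod (\<iota> k) = B" "adj (\<iota> k) \<cdot> \<iota> k = Id C (F k)"
    by simp_all
qed

lemma bp_iso: assumes "orth_biproduct C I F B \<iota>" "k \<in> I" shows "isometry C (\<iota> k)"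
  using bp_inj[OF assms] unfolding isometry_def by simp

lemma bp_orth:
  assumes "orth_biproduct C I F B \<iota>" "j \<in> I" "k \<in> I" "j \<noteq> k"
  shows "zero_mor C (adj (\<iota> j) \<cdot> \<iota> k)"
proof -
  have "\<forall>j\<in>I. \<forall>k\<in>I. j \<noteq> k \<longrightarrow> zero_mor C (Cmp C (Adj C (\<iota> j)) (\<iota> k))"
    using assms(1) unfolding orth_biproduct_def by (elim conjE)
  thus ?thesis using assms(2-4) by blast
qed

lemma bp_prod_ex:
  assumes "orth_biproduct C I F B \<iota>" "\<And>k. k \<in> I \<Longrightarrow> dom (f k) = W \<and> cod (f k) = F k"
  shows "\<exists>h. dom h = W \<and> cod h = B \<and> (\<forall>k\<in>I. adj (\<iota> k) \<cdot> h = f k)"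
proof -
  have fk: "\<forall>k\<in>I. f k \<in> hom C W (F k)" using assms(2) by (simp add: hom_iff)
  have all: "\<forall>W f. (\<forall>k\<in>I. f k \<in> hom C W (F k)) \<longrightarrow>
        (\<exists>!h. h \<in> hom C W B \<and> (\<forall>k\<in>I. Cmp C (Adj C (\<iota> k)) h = f k))"
    using assms(1) unfolding orth_biproduct_def by (elim conjE)
  have "\<exists>!h. h \<in> hom C W B \<and> (\<forall>k\<in>I. adj (\<iota> k) \<cdot> h = f k)" using all[rule_format, OF fk[rule_format]] .
  thus ?thesis unfolding hom_iff by blast
qed

lemma bp_coprod_ex:
  assumes "orth_biproduct C I F B \<iota>" "\<And>k. k \<in> I \<Longrightarrow> dom (f k) = F k \<and> cod (f k) = W"
  shows "\<exists>h. dom h = B \<and> cod h = W \<and> (\<forall>k\<in>I. h \<cdot> \<iota> k = f k)"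
proof -
  have fk: "\<forall>k\<in>I. f k \<in> hom C (F k) W" using assms(2) by (simp add: hom_iff)
  have all: "\<forall>W f. (\<forall>k\<in>I. f k \<in> hom C (F k) W) \<longrightarrow>
        (\<exists>!h. h \<in> hom C B W \<and> (\<forall>k\<in>I. Cmp C h (\<iota> k) = f k))"
    using assms(1) unfolding orth_biproduct_def by (elim conjE)
  have "\<exists>!h. h \<in> hom C B W \<and> (\<forall>k\<in>I. h \<cdot> \<iota> k = f k)" using all[rule_format, OF fk[rule_format]] .
  thus ?thesis unfolding hom_iff by blast
qed

lemma bp_prod_eq:
  assumes bp: "orth_biproduct C I F B \<iota>"
    and "dom h = W" "cod h = B" "dom h' = W" "cod h' = B"
    and eq: "\<And>k. k \<in> I \<Longrightarrow> adj (\<iota> k) \<cdot> h = adj (\<iota> k) \<cdot> h'"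
  shows "h = h'"
proof -
  let ?f = "\<lambda>k. adj (\<iota> k) \<cdot> h"
  have fk: "\<forall>k\<in>I. ?f k \<in> hom C W (F k)" using assms(2,3) bp_inj[OF bp] by (simp add: hom_iff)
  have all: "\<forall>W f. (\<forall>k\<in>I. f k \<in> hom C W (F k)) \<longrightarrow>
        (\<exists>!h. h \<in> hom C W B \<and> (\<forall>k\<in>I. Cmp C (Adj C (\<iota> k)) h = f k))"
    using bp unfolding orth_biproduct_def by (elim conjE)
  have "\<exists>!x. x \<in> hom C W B \<and> (\<forall>k\<in>I. adj (\<iota> k) \<cdot> x = ?f k)"
    using all[rule_format, OF fk[rule_format]] .
  moreover have "h \<in> hom C W B \<and> (\<forall>k\<in>I. adj (\<iota> k) \<cdot> h = ?f k)" using assms(2,3) by (simp add: hom_iff)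
  moreover have "h' \<in> hom C W B \<and> (\<forall>k\<in>I. adj (\<iota> k) \<cdot> h' = ?f k)" using assms(4,5) eq by (simp add: hom_iff)
  ultimately show ?thesis by blast
qed

lemma bp_coprod_eq:
  assumes bp: "orth_biproduct C I F B \<iota>"
    and "dom h = B" "cod h = W" "dom h' = B" "cod h' = W"
    and eq: "\<And>k. k \<in> I \<Longrightarrow> h \<cdot> \<iota> k = h' \<cdot> \<iota> k"
  shows "h = h'"
proof -
  let ?f = "\<lambda>k. h \<cdot> \<iota> k"
  have fk: "\<forall>k\<in>I. ?f k \<in> hom C (F k) W" using assms(2,3) bp_inj[OF bp] by (simp add: hom_iff)
  have all: "\<forall>W f. (\<forall>k\<in>I. f k \<in> hom C (F k) W) \<longrightarrow>
        (\<exists>!h. h \<in> hom C B W \<and> (\<forall>k\<in>I. Cmp C h (\<iota> k) = f k))"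
    using bp unfolding orth_biproduct_def by (elim conjE)
  have "\<exists>!x. x \<in> hom C B W \<and> (\<forall>k\<in>I. x \<cdot> \<iota> k = ?f k)"
    using all[rule_format, OF fk[rule_format]] .
  moreover have "h \<in> hom C B W \<and> (\<forall>k\<in>I. h \<cdot> \<iota> k = ?f k)" using assms(2,3) by (simp add: hom_iff)
  moreover have "h' \<in> hom C B W \<and> (\<forall>k\<in>I. h' \<cdot> \<iota> k = ?f k)" using assms(4,5) eq by (simp add: hom_iff)
  ultimately show ?thesis by blast
qed

lemma binary_bp: "\<exists>D (e :: nat \<Rightarrow> 'm). orth_biproduct C {0, 1} (\<lambda>k. if k = 0 then X1 else X2) D e"
  using phc unfolding pre_hilbert_star_category_def by blast

lemma diag_bp: "\<exists>D (e :: nat \<Rightarrow> 'm). orth_biproduct C {0, 1} (\<lambda>_. X) D e"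
  using binary_bp[of X X] by simp

lemma kernel_ex: "\<exists>k. kernel C k f \<and> isometry C k"
  using phc unfolding pre_hilbert_star_category_def by blast

lemma diag_kernel:
  "orth_biproduct C {0, 1} (\<lambda>_. X) D (e :: nat \<Rightarrow> 'm) \<Longrightarrow> dom d = X \<Longrightarrow> cod d = D \<Longrightarrow>
   adj (e 0) \<cdot> d = Id C X \<Longrightarrow> adj (e 1) \<cdot> d = Id C X \<Longrightarrow> \<exists>g. kernel C d g"
  using phc unfolding pre_hilbert_star_category_def hom_iff by blast

lemma kernel_props:
  assumes "kernel C k f"
  shows "cod k = dom f" "zero_mor C (f \<cdot> k)"
    "\<And>g. cod g = dom f \<Longrightarrow> zero_mor C (f \<cdot> g) \<Longrightarrow> \<exists>h. cod h = dom k \<and> k \<cdot> h = g"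
  using assms unfolding kernel_def by blast+

lemma positivity:
  assumes "zero_mor C (adj y \<cdot> y)" shows "zero_mor C y"
proof -
  obtain k where k: "kernel C k (adj y)" "isometry C k" using kernel_ex by blast
  note kp = kernel_props[OF k(1)]
  have ck: "cod k = cod y" using kp(1) by simp
  obtain c where c: "cod c = dom k" "k \<cdot> c = y" using kp(3)[of y] assms by auto
  have "adj y \<cdot> k = adj c \<cdot> (adj k \<cdot> k)"
    using c(1) by (simp flip: c(2))
  also have "\<dots> = adj c" using k(2) c(1) by (simp add: iso_eq)
  finally have "zero_mor C (adj c)" using kp(2) by simp
  hence "zero_mor C c" by (simp add: zero_adj_iff)
  hence "zero_mor C (k \<cdot> c)" using zero_cmp_l c(1) by blast
  thus ?thesis using c(2) by simp
qed

lemma bp2_prod_ex: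
  assumes bp: "orth_biproduct C {0::nat, 1} F D e"
    and "dom a = W" "cod a = F 0" "dom b = W" "cod b = F 1"
  shows "\<exists>h. dom h = W \<and> cod h = D \<and> adj (e 0) \<cdot> h = a \<and> adj (e 1) \<cdot> h = b"
proof -
  define g where "g = (\<lambda>k::nat. if k = 0 then a else b)"
  have pre: "\<And>k. k \<in> {0, 1} \<Longrightarrow> dom (g k) = W \<and> cod (g k) = F k" using assms(2-5) unfolding g_def by auto
  have "\<exists>h. dom h = W \<and> cod h = D \<and> (\<forall>k\<in>{0,1}. adj (e k) \<cdot> h = g k)"
    by (rule bp_prod_ex[OF bp]) (rule pre)
  then obtain h where h: "dom h = W" "cod h = D" "\<forall>k\<in>{0,1}. adj (e k) \<cdot> h = g k"
    by (elim exE conjE)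
  have "adj (e 0) \<cdot> h = a" "adj (e 1) \<cdot> h = b" using h(3) unfolding g_def by simp_all
  thus ?thesis using h(1,2) by blast
qed

lemma bp2_coprod_ex:
  assumes bp: "orth_biproduct C {0::nat, 1} F D e"
    and "cod a = W" "dom a = F 0" "cod b = W" "dom b = F 1"
  shows "\<exists>h. dom h = D \<and> cod h = W \<and> h \<cdot> e 0 = a \<and> h \<cdot> e 1 = b"
proof -
  define g where "g = (\<lambda>k::nat. if k = 0 then a else b)"
  have pre: "\<And>k. k \<in> {0, 1} \<Longrightarrow> dom (g k) = F k \<and> cod (g k) = W" using assms(2-5) unfolding g_def by auto
  have "\<exists>h. dom h = D \<and> cod h = W \<and> (\<forall>k\<in>{0,1}. h \<cdot> e k = g k)"
    by (rule bp_coprod_ex[OF bp]) (rule pre)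
  then obtain h where h: "dom h = D" "cod h = W" "\<forall>k\<in>{0,1}. h \<cdot> e k = g k"
    by (elim exE conjE)
  have "h \<cdot> e 0 = a" "h \<cdot> e 1 = b" using h(3) unfolding g_def by simp_all
  thus ?thesis using h(1,2) by blast
qed

lemma bp2_prod_eq:
  assumes bp: "orth_biproduct C {0::nat, 1} F D e"
    and "dom h = W" "cod h = D" "dom h' = W" "cod h' = D"
    and "adj (e 0) \<cdot> h = adj (e 0) \<cdot> h'" "adj (e 1) \<cdot> h = adj (e 1) \<cdot> h'"
  shows "h = h'"
  using bp_prod_eq[OF bp assms(2-5)] assms(6,7) by blast

lemma bp2_coprod_eq:
  assumes bp: "orth_biproduct C {0::nat, 1} F D e"
    and "dom h = D" "cod h = W" "dom h' = D" "cod h' = W"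
    and "h \<cdot> e 0 = h' \<cdot> e 0" "h \<cdot> e 1 = h' \<cdot> e 1"
  shows "h = h'"
  using bp_coprod_eq[OF bp assms(2-5)] assms(6,7) by blast
end

context phc
begin

lemma zero_monic_mono:
  assumes zm: "\<And>h. cod h = dom m \<Longrightarrow> zero_mor C (m \<cdot> h) \<Longrightarrow> zero_mor C h"
    and cf: "cod f = dom m" and cg: "cod g = dom m" and dfg: "dom f = dom g" and eq: "m \<cdot> f = m \<cdot> g"
  shows "f = g"
proof -
  obtain W where W: "W = dom f" by blast
  obtain X where X: "X = dom m" by blast
  obtain D and e :: "nat \<Rightarrow> 'm" where bp: "orth_biproduct C {0, 1} (\<lambda>_. W) D e" using diag_bp by blast
  have e0: "dom (e 0) = W" "cod (e 0) = D" and e1: "dom (e 1) = W" "cod (e 1) = D"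
    using bp_inj[OF bp] by auto
  obtain \<Delta> where \<Delta>: "dom \<Delta> = W" "cod \<Delta> = D" and \<Delta>0: "adj (e 0) \<cdot> \<Delta> = Id C W" and \<Delta>1: "adj (e 1) \<cdot> \<Delta> = Id C W"
    using bp2_prod_ex[OF bp, of "Id C W" W "Id C W"] by auto
  obtain d where kd: "kernel C \<Delta> d" using diag_kernel[OF bp \<Delta>(1,2) \<Delta>0 \<Delta>1] by blast
  note kp = kernel_props[OF kd]
  have af: "dom (adj f) = X" "cod (adj f) = W" "dom (adj g) = X" "cod (adj g) = W"
    using cf cg dfg W X by simp_all
  obtain P where P: "dom P = X" "cod P = D" and P0: "adj (e 0) \<cdot> P = adj f" and P1: "adj (e 1) \<cdot> P = adj g"
    using bp2_prod_ex[OF bp af(1) _ af(3)] af(2,4) by auto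
  have fm: "adj f \<cdot> adj m = adj g \<cdot> adj m"
  proof -
    have "adj (m \<cdot> f) = adj (m \<cdot> g)" using eq by simp
    thus ?thesis using cf cg by simp
  qed
  define q where "q = adj f \<cdot> adj m"
  have q: "dom q = cod m" "cod q = W" unfolding q_def using cf W by simp_all
  have Pm: "P \<cdot> adj m = \<Delta> \<cdot> q"
  proof (rule bp2_prod_eq[OF bp])
    show "dom (P \<cdot> adj m) = cod m" "cod (P \<cdot> adj m) = D" using P X by simp_all
    show "dom (\<Delta> \<cdot> q) = cod m" "cod (\<Delta> \<cdot> q) = D" using \<Delta> q by simp_all
    have "adj (e 0) \<cdot> (P \<cdot> adj m) = (adj (e 0) \<cdot> P) \<cdot> adj m" using P e0 X by simp
    also have "\<dots> = q" using P0 q_def by simp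
    also have "\<dots> = (adj (e 0) \<cdot> \<Delta>) \<cdot> q" using \<Delta>0 q by simp
    also have "\<dots> = adj (e 0) \<cdot> (\<Delta> \<cdot> q)" using \<Delta> e0 q by simp
    finally show "adj (e 0) \<cdot> (P \<cdot> adj m) = adj (e 0) \<cdot> (\<Delta> \<cdot> q)" .
    have "adj (e 1) \<cdot> (P \<cdot> adj m) = (adj (e 1) \<cdot> P) \<cdot> adj m" using P e1 X by simp
    also have "\<dots> = q" using P1 q_def fm by simp
    also have "\<dots> = (adj (e 1) \<cdot> \<Delta>) \<cdot> q" using \<Delta>1 q by simp
    also have "\<dots> = adj (e 1) \<cdot> (\<Delta> \<cdot> q)" using \<Delta> e1 q by simp
    finally show "adj (e 1) \<cdot> (P \<cdot> adj m) = adj (e 1) \<cdot> (\<Delta> \<cdot> q)" .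
  qed
  have cPd: "cod P = dom d" using P kp(1) \<Delta> by simp
  have dd: "dom d = D" using kp(1) \<Delta> by simp
  have z1: "zero_mor C ((d \<cdot> \<Delta>) \<cdot> q)"
    using zero_cmp_r[OF kp(2)] q \<Delta> dd by simp
  have "(d \<cdot> \<Delta>) \<cdot> q = d \<cdot> (\<Delta> \<cdot> q)" using \<Delta> q dd by simp
  also have "\<dots> = d \<cdot> (P \<cdot> adj m)" using Pm by simp
  also have "\<dots> = (d \<cdot> P) \<cdot> adj m" using P dd X by simp
  finally have z2: "zero_mor C ((d \<cdot> P) \<cdot> adj m)" using z1 by simp
  have "adj ((d \<cdot> P) \<cdot> adj m) = m \<cdot> adj (d \<cdot> P)" using P dd X by simp
  hence z3: "zero_mor C (m \<cdot> adj (d \<cdot> P))" using zero_adj[OF z2] by simp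
  have "cod (adj (d \<cdot> P)) = dom m" using P dd X by simp
  hence "zero_mor C (adj (d \<cdot> P))" using zm z3 by blast
  hence "zero_mor C (d \<cdot> P)" by (simp add: zero_adj_iff)
  then obtain c where c: "cod c = dom \<Delta>" "\<Delta> \<cdot> c = P" using kp(3)[OF cPd] by blast
  have "adj f = adj (e 0) \<cdot> (\<Delta> \<cdot> c)" using P0 c by simp
  also have "\<dots> = (adj (e 0) \<cdot> \<Delta>) \<cdot> c" using \<Delta> e0 c by simp
  also have "\<dots> = c" using \<Delta>0 \<Delta> c by simp
  finally have 1: "adj f = c" .
  have "adj g = adj (e 1) \<cdot> (\<Delta> \<cdot> c)" using P1 c by simp
  also have "\<dots> = (adj (e 1) \<cdot> \<Delta>) \<cdot> c" using \<Delta> e1 c by simp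
  also have "\<dots> = c" using \<Delta>1 \<Delta> c by simp
  finally have "adj g = c" .
  with 1 show ?thesis using adj_inj by simp
qed
end

context phc
begin

lemma ioc_props:
  assumes "iso_orth_complement C a b"
  shows "isometry C b" "cod b = cod a" "zero_mor C (adj a \<cdot> b)" "zero_mor C (adj b \<cdot> a)"
    "\<And>h. cod h = cod a \<Longrightarrow> zero_mor C (adj a \<cdot> h) \<Longrightarrow> \<exists>c. cod c = dom b \<and> b \<cdot> c = h"
proof -
  have k: "kernel C b (adj a)" and i: "isometry C b" using assms unfolding iso_orth_complement_def by blast+
  note kp = kernel_props[OF k]
  show "isometry C b" by (fact i)
  show cb: "cod b = cod a" using kp(1) by simp
  show z: "zero_mor C (adj a \<cdot> b)" by (fact kp(2))
  have "adj (adj a \<cdot> b) = adj b \<cdot> a" using cb by simp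
  thus "zero_mor C (adj b \<cdot> a)" using zero_adj[OF z] by simp
  fix h assume "cod h = cod a" "zero_mor C (adj a \<cdot> h)"
  thus "\<exists>c. cod c = dom b \<and> b \<cdot> c = h" using kp(3)[of h] by simp
qed

lemma decomp:
  assumes bp: "orth_biproduct C I F B \<iota>" and i: "i0 \<in> I" "i1 \<in> I" "i0 \<noteq> i1"
    and a: "isometry C a" "dom a = F i0" "cod a = X"
    and b: "iso_orth_complement C a b" "dom b = F i1"
    and u: "dom u = X" "cod u = B" "adj (\<iota> i0) \<cdot> u = adj a" "adj (\<iota> i1) \<cdot> u = adj b"
      "\<And>k. k \<in> I \<Longrightarrow> k \<noteq> i0 \<Longrightarrow> k \<noteq> i1 \<Longrightarrow> zero_mor C (adj (\<iota> k) \<cdot> u)"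
  shows "u \<cdot> a = \<iota> i0" "u \<cdot> b = \<iota> i1" "adj u \<cdot> u = Id C X"
    and "\<And>f g. dom f = X \<Longrightarrow> dom g = X \<Longrightarrow> cod f = cod g \<Longrightarrow> f \<cdot> a = g \<cdot> a \<Longrightarrow> f \<cdot> b = g \<cdot> b \<Longrightarrow> f = g"
proof -
  note bo = ioc_props[OF b(1)]
  have cb: "cod b = X" using bo(2) a(3) by simp
  note bi0 = bp_inj[OF bp i(1)] and bi1 = bp_inj[OF bp i(2)]
  have bik: "dom (\<iota> k) = F k" "cod (\<iota> k) = B" if "k \<in> I" for k using bp_inj[OF bp that] by simp_all
  show ua: "u \<cdot> a = \<iota> i0"
  proof (rule bp_prod_eq[OF bp])
    show "dom (u \<cdot> a) = F i0" "cod (u \<cdot> a) = B" using u a by simp_all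
    show "dom (\<iota> i0) = F i0" "cod (\<iota> i0) = B" using bi0 by simp_all
    fix k assume k: "k \<in> I"
    have 1: "adj (\<iota> k) \<cdot> (u \<cdot> a) = (adj (\<iota> k) \<cdot> u) \<cdot> a" using u a bik[OF k] by simp
    show "adj (\<iota> k) \<cdot> (u \<cdot> a) = adj (\<iota> k) \<cdot> \<iota> i0"
    proof (cases "k = i0")
      case True thus ?thesis using 1 u(3) a bi0 by (simp add: iso_eq)
    next
      case False
      have z2: "zero_mor C (adj (\<iota> k) \<cdot> \<iota> i0)" using bp_orth[OF bp k i(1) False] .
      have z1: "zero_mor C ((adj (\<iota> k) \<cdot> u) \<cdot> a)"
      proof (cases "k = i1")
        case True thus ?thesis using u(4) bo(4) by simp
      next
        case False2: False
        show ?thesis using zero_cmp_r[OF u(5)[OF k False False2]] u a bik[OF k] by simp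
      qed
      show ?thesis using 1 zero_unique[OF z1 z2] u a bik[OF k] bi0 by simp
    qed
  qed
  show ub: "u \<cdot> b = \<iota> i1"
  proof (rule bp_prod_eq[OF bp])
    show "dom (u \<cdot> b) = F i1" "cod (u \<cdot> b) = B" using u b cb by simp_all
    show "dom (\<iota> i1) = F i1" "cod (\<iota> i1) = B" using bi1 by simp_all
    fix k assume k: "k \<in> I"
    have 1: "adj (\<iota> k) \<cdot> (u \<cdot> b) = (adj (\<iota> k) \<cdot> u) \<cdot> b" using u cb bik[OF k] by simp
    show "adj (\<iota> k) \<cdot> (u \<cdot> b) = adj (\<iota> k) \<cdot> \<iota> i1"
    proof (cases "k = i1")
      case True thus ?thesis using 1 u(4) b(2) bo(1) bi1 by (simp add: iso_eq)
    next
      case False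
      have z2: "zero_mor C (adj (\<iota> k) \<cdot> \<iota> i1)" using bp_orth[OF bp k i(2) False] .
      have z1: "zero_mor C ((adj (\<iota> k) \<cdot> u) \<cdot> b)"
      proof (cases "k = i0")
        case True thus ?thesis using u(3) bo(3) by simp
      next
        case False2: False
        show ?thesis using zero_cmp_r[OF u(5)[OF k False2 False]] u cb bik[OF k] by simp
      qed
      show ?thesis using 1 zero_unique[OF z1 z2] u b cb bik[OF k] bi1 by simp
    qed
  qed
  define e where "e = adj u \<cdot> u"
  have de: "dom e = X" "cod e = X" unfolding e_def using u by simp_all
  have uuu: "u \<cdot> e = u"
  proof (rule bp_prod_eq[OF bp])
    show "dom (u \<cdot> e) = X" "cod (u \<cdot> e) = B" using u de by simp_all
    show "dom u = X" "cod u = B" using u by simp_all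
    fix k assume k: "k \<in> I"
    have 1: "adj (\<iota> k) \<cdot> (u \<cdot> e) = (adj (\<iota> k) \<cdot> u) \<cdot> e" using u de bik[OF k] by simp
    show "adj (\<iota> k) \<cdot> (u \<cdot> e) = adj (\<iota> k) \<cdot> u"
    proof (cases "k = i0")
      case True
      have aa: "adj a \<cdot> adj u = adj (\<iota> i0)"
      proof -
        have "adj (u \<cdot> a) = adj a \<cdot> adj u" using u a by simp
        thus ?thesis using ua by simp
      qed
      have "adj (\<iota> k) \<cdot> (u \<cdot> e) = adj a \<cdot> e" using 1 True u(3) by simp
      also have "\<dots> = (adj a \<cdot> adj u) \<cdot> u" unfolding e_def using u a by simp
      also have "\<dots> = adj (\<iota> i0) \<cdot> u" using aa by simp
      finally show ?thesis using True by simp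
    next
      case F0: False
      show ?thesis
      proof (cases "k = i1")
        case True
        have bb: "adj b \<cdot> adj u = adj (\<iota> i1)"
        proof -
          have "adj (u \<cdot> b) = adj b \<cdot> adj u" using u cb by simp
          thus ?thesis using ub by simp
        qed
        have "adj (\<iota> k) \<cdot> (u \<cdot> e) = adj b \<cdot> e" using 1 True u(4) by simp
        also have "\<dots> = (adj b \<cdot> adj u) \<cdot> u" unfolding e_def using u cb by simp
        also have "\<dots> = adj (\<iota> i1) \<cdot> u" using bb by simp
        finally show ?thesis using True by simp
      next
        case False
        have z: "zero_mor C (adj (\<iota> k) \<cdot> u)" using u(5)[OF k F0 False] .
        have z2: "zero_mor C ((adj (\<iota> k) \<cdot> u) \<cdot> e)" using zero_cmp_r[OF z] de u bik[OF k] by simp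
        have "(adj (\<iota> k) \<cdot> u) \<cdot> e = adj (\<iota> k) \<cdot> u"
          by (rule zero_unique[OF z2 z]) (use de u bik[OF k] in simp_all)
        thus ?thesis using 1 by simp
      qed
    qed
  qed
  have zm: "zero_mor C h" if ch: "cod h = dom e" and z: "zero_mor C (e \<cdot> h)" for h
  proof -
    have ch': "cod h = X" using ch de by simp
    have "u \<cdot> (e \<cdot> h) = (u \<cdot> e) \<cdot> h" using ch' de u by simp
    hence ueh: "u \<cdot> (e \<cdot> h) = u \<cdot> h" using uuu by simp
    have "zero_mor C (u \<cdot> (e \<cdot> h))" using zero_cmp_l[OF z, of u] ch' de u by simp
    hence zu: "zero_mor C (u \<cdot> h)" using ueh by simp
    have "adj (\<iota> i0) \<cdot> (u \<cdot> h) = (adj (\<iota> i0) \<cdot> u) \<cdot> h" by (rule assoc') (use u ch' bi0 in simp_all)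
    hence "adj a \<cdot> h = adj (\<iota> i0) \<cdot> (u \<cdot> h)" using u(3) by simp
    hence za: "zero_mor C (adj a \<cdot> h)" using zero_cmp_l[OF zu] u ch' bi0 by simp
    obtain c where c: "cod c = dom b" "b \<cdot> c = h" using bo(5)[OF _ za] ch' a(3) by auto
    have "adj (\<iota> i1) \<cdot> (u \<cdot> h) = (adj (\<iota> i1) \<cdot> u) \<cdot> h" by (rule assoc') (use u ch' bi1 in simp_all)
    hence "adj b \<cdot> h = adj (\<iota> i1) \<cdot> (u \<cdot> h)" using u(4) by simp
    hence zb: "zero_mor C (adj b \<cdot> h)" using zero_cmp_l[OF zu] u ch' bi1 by simp
    have "adj b \<cdot> h = c" using iso_cancel[OF bo(1) c(1)] c(2) by simp
    hence "zero_mor C c" using zb by simp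
    thus ?thesis using zero_cmp_l[of c b] c by simp
  qed
  have ee: "e \<cdot> e = e \<cdot> Id C X"
  proof -
    have "e \<cdot> e = adj u \<cdot> (u \<cdot> e)" unfolding e_def using u by simp
    thus ?thesis using uuu de e_def by simp
  qed
  have "e = Id C X" using zero_monic_mono[OF zm _ _ _ ee] de by simp
  thus "adj u \<cdot> u = Id C X" unfolding e_def .
  note ui = this
  have ua': "adj u \<cdot> \<iota> i0 = a"
  proof -
    have "adj (adj (\<iota> i0) \<cdot> u) = adj u \<cdot> adj (adj (\<iota> i0))" by (rule adj_cmp) (use u bi0 in simp)
    thus ?thesis using u(3) by simp
  qed
  have ub': "adj u \<cdot> \<iota> i1 = b"
  proof -
    have "adj (adj (\<iota> i1) \<cdot> u) = adj u \<cdot> adj (adj (\<iota> i1))" by (rule adj_cmp) (use u bi1 in simp)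
    thus ?thesis using u(4) by simp
  qed
  have uk': "zero_mor C (adj u \<cdot> \<iota> k)" if "k \<in> I" "k \<noteq> i0" "k \<noteq> i1" for k
  proof -
    have "adj (adj (\<iota> k) \<cdot> u) = adj u \<cdot> adj (adj (\<iota> k))" by (rule adj_cmp) (use u bik[OF that(1)] in simp)
    thus ?thesis using zero_adj[OF u(5)[OF that]] by simp
  qed
  fix f g assume fg: "dom f = X" "dom g = X" "cod f = cod g" "f \<cdot> a = g \<cdot> a" "f \<cdot> b = g \<cdot> b"
  have "f \<cdot> adj u = g \<cdot> adj u"
  proof (rule bp_coprod_eq[OF bp])
    show "dom (f \<cdot> adj u) = B" "cod (f \<cdot> adj u) = cod f" using u fg by simp_all
    show "dom (g \<cdot> adj u) = B" "cod (g \<cdot> adj u) = cod f" using u fg by simp_all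
    fix k assume k: "k \<in> I"
    have 1: "(f \<cdot> adj u) \<cdot> \<iota> k = f \<cdot> (adj u \<cdot> \<iota> k)" using u fg bik[OF k] by simp
    have 2: "(g \<cdot> adj u) \<cdot> \<iota> k = g \<cdot> (adj u \<cdot> \<iota> k)" using u fg bik[OF k] by simp
    show "(f \<cdot> adj u) \<cdot> \<iota> k = (g \<cdot> adj u) \<cdot> \<iota> k"
    proof (cases "k = i0")
      case True thus ?thesis using 1 2 ua' fg by simp
    next
      case F0: False
      show ?thesis
      proof (cases "k = i1")
        case True thus ?thesis using 1 2 ub' fg by simp
      next
        case False
        note z = uk'[OF k F0 False]
        have d: "cod (adj u \<cdot> \<iota> k) = X" "dom (adj u \<cdot> \<iota> k) = F k" using u bik[OF k] by simp_all
        have "zero_mor C (f \<cdot> (adj u \<cdot> \<iota> k))" "zero_mor C (g \<cdot> (adj u \<cdot> \<iota> k))"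
          using zero_cmp_l[OF z] d fg by simp_all
        hence "f \<cdot> (adj u \<cdot> \<iota> k) = g \<cdot> (adj u \<cdot> \<iota> k)"
          by (intro zero_unique) (use d fg in simp_all)
        thus ?thesis using 1 2 by simp
      qed
    qed
  qed
  hence "(f \<cdot> adj u) \<cdot> u = (g \<cdot> adj u) \<cdot> u" by simp
  thus "f = g" using ui u fg by simp
qed

end

context phc
begin

lemma shear:
  assumes bpS: "orth_biproduct C {0::nat, 1} G S \<kappa>"
    and z: "dom z = A" "cod z = S" "isometry C z"
    and t: "adj (\<kappa> 0) \<cdot> z = t" "isometry C t"
    and y: "adj (\<kappa> 1) \<cdot> z = y"
  shows "zero_mor C y"
proof -
  have k0: "dom (\<kappa> 0) = G 0" "cod (\<kappa> 0) = S" "adj (\<kappa> 0) \<cdot> \<kappa> 0 = Id C (G 0)" using bp_inj[OF bpS] by auto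
  have k1: "dom (\<kappa> 1) = G 1" "cod (\<kappa> 1) = S" "adj (\<kappa> 1) \<cdot> \<kappa> 1 = Id C (G 1)" using bp_inj[OF bpS] by auto
  have k01: "zero_mor C (adj (\<kappa> 0) \<cdot> \<kappa> 1)" "zero_mor C (adj (\<kappa> 1) \<cdot> \<kappa> 0)" using bp_orth[OF bpS] by auto
  have td: "dom t = A" "cod t = G 0" using t(1) z k0 by auto
  have yd: "dom y = A" "cod y = G 1" using y z k1 by auto
  obtain D and e :: "nat \<Rightarrow> 'm" where bp: "orth_biproduct C {0, 1} (\<lambda>_. A) D e" using diag_bp by blast
  have e0: "dom (e 0) = A" "cod (e 0) = D" "adj (e 0) \<cdot> e 0 = Id C A" and ie0: "isometry C (e 0)"
    using bp_inj[OF bp] bp_iso[OF bp] by auto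
  have e1: "dom (e 1) = A" "cod (e 1) = D" "adj (e 1) \<cdot> e 1 = Id C A" and ie1: "isometry C (e 1)"
    using bp_inj[OF bp] bp_iso[OF bp] by auto
  have e01: "zero_mor C (adj (e 0) \<cdot> e 1)" "zero_mor C (adj (e 1) \<cdot> e 0)" using bp_orth[OF bp] by auto
  obtain \<Sigma> where \<Sigma>: "dom \<Sigma> = D" "cod \<Sigma> = A" "\<Sigma> \<cdot> e 0 = Id C A" "\<Sigma> \<cdot> e 1 = Id C A"
    using bp2_coprod_ex[OF bp, of "Id C A" A "Id C A"] by auto
  obtain L where L: "dom L = S" "cod L = D" "adj (e 0) \<cdot> L = adj t \<cdot> adj (\<kappa> 0)" "adj (e 1) \<cdot> L = adj y \<cdot> adj (\<kappa> 1)"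
    using bp2_prod_ex[OF bp, of "adj t \<cdot> adj (\<kappa> 0)" S "adj y \<cdot> adj (\<kappa> 1)"] td yd k0 k1 by auto
  define H where "H = L \<cdot> z"
  have Hd: "dom H = A" "cod H = D" unfolding H_def using L z by auto
  have H0: "adj (e 0) \<cdot> H = Id C A"
  proof -
    have "adj (e 0) \<cdot> H = (adj (e 0) \<cdot> L) \<cdot> z" unfolding H_def by (rule assoc') (use L z e0 in simp_all)
    also have "\<dots> = (adj t \<cdot> adj (\<kappa> 0)) \<cdot> z" using L by simp
    also have "\<dots> = adj t \<cdot> t" using t(1) z k0 td by simp
    also have "\<dots> = Id C A" using t(2) td by (simp add: iso_eq)
    finally show ?thesis .
  qed
  have H1: "adj (e 1) \<cdot> H = adj y \<cdot> y"
  proof -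
    have "adj (e 1) \<cdot> H = (adj (e 1) \<cdot> L) \<cdot> z" unfolding H_def by (rule assoc') (use L z e1 in simp_all)
    also have "\<dots> = (adj y \<cdot> adj (\<kappa> 1)) \<cdot> z" using L by simp
    also have "\<dots> = adj y \<cdot> y" using y z k1 yd by simp
    finally show ?thesis .
  qed
  have Lk0: "L \<cdot> \<kappa> 0 = e 0 \<cdot> adj t"
  proof (rule bp2_prod_eq[OF bp])
    show "dom (L \<cdot> \<kappa> 0) = G 0" "cod (L \<cdot> \<kappa> 0) = D" "dom (e 0 \<cdot> adj t) = G 0" "cod (e 0 \<cdot> adj t) = D"
      using L k0 e0 td by simp_all
    have "adj (e 0) \<cdot> (L \<cdot> \<kappa> 0) = (adj (e 0) \<cdot> L) \<cdot> \<kappa> 0" by (rule assoc') (use L k0 e0 in simp_all)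
    also have "\<dots> = adj t \<cdot> (adj (\<kappa> 0) \<cdot> \<kappa> 0)" using L k0 td by simp
    also have "\<dots> = adj t" using k0 td by simp
    also have "\<dots> = adj (e 0) \<cdot> (e 0 \<cdot> adj t)" using iso_cancel[OF ie0, of "adj t"] e0 td by simp
    finally show "adj (e 0) \<cdot> (L \<cdot> \<kappa> 0) = adj (e 0) \<cdot> (e 0 \<cdot> adj t)" .
    have "adj (e 1) \<cdot> (L \<cdot> \<kappa> 0) = (adj (e 1) \<cdot> L) \<cdot> \<kappa> 0" by (rule assoc') (use L k0 e1 in simp_all)
    also have "\<dots> = adj y \<cdot> (adj (\<kappa> 1) \<cdot> \<kappa> 0)" using L k0 k1 yd by simp
    finally have a1: "adj (e 1) \<cdot> (L \<cdot> \<kappa> 0) = adj y \<cdot> (adj (\<kappa> 1) \<cdot> \<kappa> 0)" .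
    have za: "zero_mor C (adj y \<cdot> (adj (\<kappa> 1) \<cdot> \<kappa> 0))" using zero_cmp_l[OF k01(2)] k0 k1 yd by simp
    have b1: "adj (e 1) \<cdot> (e 0 \<cdot> adj t) = (adj (e 1) \<cdot> e 0) \<cdot> adj t" by (rule assoc') (use e0 e1 td in simp_all)
    have zb: "zero_mor C ((adj (e 1) \<cdot> e 0) \<cdot> adj t)" using zero_cmp_r[OF e01(2)] e0 e1 td by simp
    have "adj y \<cdot> (adj (\<kappa> 1) \<cdot> \<kappa> 0) = (adj (e 1) \<cdot> e 0) \<cdot> adj t"
      by (rule zero_unique[OF za zb]) (use k0 k1 yd e0 e1 td in simp_all)
    thus "adj (e 1) \<cdot> (L \<cdot> \<kappa> 0) = adj (e 1) \<cdot> (e 0 \<cdot> adj t)" using a1 b1 by simp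
  qed
  have Lk1: "L \<cdot> \<kappa> 1 = e 1 \<cdot> adj y"
  proof (rule bp2_prod_eq[OF bp])
    show "dom (L \<cdot> \<kappa> 1) = G 1" "cod (L \<cdot> \<kappa> 1) = D" "dom (e 1 \<cdot> adj y) = G 1" "cod (e 1 \<cdot> adj y) = D"
      using L k1 e1 yd by simp_all
    have "adj (e 1) \<cdot> (L \<cdot> \<kappa> 1) = (adj (e 1) \<cdot> L) \<cdot> \<kappa> 1" by (rule assoc') (use L k1 e1 in simp_all)
    also have "\<dots> = adj y \<cdot> (adj (\<kappa> 1) \<cdot> \<kappa> 1)" using L k1 yd by simp
    also have "\<dots> = adj y" using k1 yd by simp
    also have "\<dots> = adj (e 1) \<cdot> (e 1 \<cdot> adj y)" using iso_cancel[OF ie1, of "adj y"] e1 yd by simp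
    finally show "adj (e 1) \<cdot> (L \<cdot> \<kappa> 1) = adj (e 1) \<cdot> (e 1 \<cdot> adj y)" .
    have "adj (e 0) \<cdot> (L \<cdot> \<kappa> 1) = (adj (e 0) \<cdot> L) \<cdot> \<kappa> 1" by (rule assoc') (use L k1 e0 in simp_all)
    also have "\<dots> = adj t \<cdot> (adj (\<kappa> 0) \<cdot> \<kappa> 1)" using L k0 k1 td by simp
    finally have a1: "adj (e 0) \<cdot> (L \<cdot> \<kappa> 1) = adj t \<cdot> (adj (\<kappa> 0) \<cdot> \<kappa> 1)" .
    have za: "zero_mor C (adj t \<cdot> (adj (\<kappa> 0) \<cdot> \<kappa> 1))" using zero_cmp_l[OF k01(1)] k0 k1 td by simp
    have b1: "adj (e 0) \<cdot> (e 1 \<cdot> adj y) = (adj (e 0) \<cdot> e 1) \<cdot> adj y" by (rule assoc') (use e0 e1 yd in simp_all)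
    have zb: "zero_mor C ((adj (e 0) \<cdot> e 1) \<cdot> adj y)" using zero_cmp_r[OF e01(1)] e0 e1 yd by simp
    have "adj t \<cdot> (adj (\<kappa> 0) \<cdot> \<kappa> 1) = (adj (e 0) \<cdot> e 1) \<cdot> adj y"
      by (rule zero_unique[OF za zb]) (use k0 k1 td e0 e1 yd in simp_all)
    thus "adj (e 0) \<cdot> (L \<cdot> \<kappa> 1) = adj (e 0) \<cdot> (e 1 \<cdot> adj y)" using a1 b1 by simp
  qed
  have SL: "\<Sigma> \<cdot> L = adj z"
  proof (rule bp2_coprod_eq[OF bpS])
    show "dom (\<Sigma> \<cdot> L) = S" "cod (\<Sigma> \<cdot> L) = A" "dom (adj z) = S" "cod (adj z) = A"
      using \<Sigma> L z by simp_all
    have "(\<Sigma> \<cdot> L) \<cdot> \<kappa> 0 = \<Sigma> \<cdot> (e 0 \<cdot> adj t)" using \<Sigma> L k0 Lk0 by simp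
    also have "\<dots> = (\<Sigma> \<cdot> e 0) \<cdot> adj t" by (rule assoc') (use \<Sigma> e0 td in simp_all)
    also have "\<dots> = adj t" using \<Sigma> td by simp
    also have "\<dots> = adj z \<cdot> \<kappa> 0"
    proof -
      have "adj (adj (\<kappa> 0) \<cdot> z) = adj z \<cdot> adj (adj (\<kappa> 0))" by (rule adj_cmp) (use z k0 in simp)
      thus ?thesis using t(1) by simp
    qed
    finally show "(\<Sigma> \<cdot> L) \<cdot> \<kappa> 0 = adj z \<cdot> \<kappa> 0" .
    have "(\<Sigma> \<cdot> L) \<cdot> \<kappa> 1 = \<Sigma> \<cdot> (e 1 \<cdot> adj y)" using \<Sigma> L k1 Lk1 by simp
    also have "\<dots> = (\<Sigma> \<cdot> e 1) \<cdot> adj y" by (rule assoc') (use \<Sigma> e1 yd in simp_all)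
    also have "\<dots> = adj y" using \<Sigma> yd by simp
    also have "\<dots> = adj z \<cdot> \<kappa> 1"
    proof -
      have "adj (adj (\<kappa> 1) \<cdot> z) = adj z \<cdot> adj (adj (\<kappa> 1))" by (rule adj_cmp) (use z k1 in simp)
      thus ?thesis using y by simp
    qed
    finally show "(\<Sigma> \<cdot> L) \<cdot> \<kappa> 1 = adj z \<cdot> \<kappa> 1" .
  qed
  have SH: "\<Sigma> \<cdot> H = Id C A"
  proof -
    have "\<Sigma> \<cdot> H = (\<Sigma> \<cdot> L) \<cdot> z" unfolding H_def by (rule assoc') (use \<Sigma> L z in simp_all)
    also have "\<dots> = adj z \<cdot> z" using SL by simp
    also have "\<dots> = Id C A" using z by (simp add: iso_eq)
    finally show ?thesis .
  qed
  obtain Sh where Sh: "dom Sh = D" "cod Sh = D" "adj (e 0) \<cdot> Sh = adj (e 0)" "adj (e 1) \<cdot> Sh = \<Sigma>"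
    using bp2_prod_ex[OF bp, of "adj (e 0)" D \<Sigma>] e0 \<Sigma> by auto
  have ShH: "Sh \<cdot> H = Sh \<cdot> e 0"
  proof (rule bp2_prod_eq[OF bp])
    show "dom (Sh \<cdot> H) = A" "cod (Sh \<cdot> H) = D" "dom (Sh \<cdot> e 0) = A" "cod (Sh \<cdot> e 0) = D"
      using Sh Hd e0 by simp_all
    have "adj (e 0) \<cdot> (Sh \<cdot> H) = (adj (e 0) \<cdot> Sh) \<cdot> H" by (rule assoc') (use Sh Hd e0 in simp_all)
    also have "\<dots> = Id C A" using Sh H0 by simp
    also have "\<dots> = (adj (e 0) \<cdot> Sh) \<cdot> e 0" using Sh e0 by simp
    also have "\<dots> = adj (e 0) \<cdot> (Sh \<cdot> e 0)" by (rule assoc) (use Sh e0 in simp_all)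
    finally show "adj (e 0) \<cdot> (Sh \<cdot> H) = adj (e 0) \<cdot> (Sh \<cdot> e 0)" .
    have "adj (e 1) \<cdot> (Sh \<cdot> H) = (adj (e 1) \<cdot> Sh) \<cdot> H" by (rule assoc') (use Sh Hd e1 in simp_all)
    also have "\<dots> = Id C A" using Sh SH by simp
    also have "\<dots> = (adj (e 1) \<cdot> Sh) \<cdot> e 0" using Sh \<Sigma> by simp
    also have "\<dots> = adj (e 1) \<cdot> (Sh \<cdot> e 0)" by (rule assoc) (use Sh e0 e1 in simp_all)
    finally show "adj (e 1) \<cdot> (Sh \<cdot> H) = adj (e 1) \<cdot> (Sh \<cdot> e 0)" .
  qed
  have zm: "zero_mor C h" if ch: "cod h = dom Sh" and zh: "zero_mor C (Sh \<cdot> h)" for h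
  proof -
    have ch': "cod h = D" using ch Sh by simp
    have "adj (e 0) \<cdot> h = (adj (e 0) \<cdot> Sh) \<cdot> h" using Sh by simp
    also have "\<dots> = adj (e 0) \<cdot> (Sh \<cdot> h)" by (rule assoc) (use Sh e0 ch' in simp_all)
    finally have z0: "zero_mor C (adj (e 0) \<cdot> h)" using zero_cmp_l[OF zh, of "adj (e 0)"] Sh e0 ch' by simp
    have "\<Sigma> \<cdot> h = (adj (e 1) \<cdot> Sh) \<cdot> h" using Sh by simp
    also have "\<dots> = adj (e 1) \<cdot> (Sh \<cdot> h)" by (rule assoc) (use Sh e1 ch' in simp_all)
    finally have zS: "zero_mor C (\<Sigma> \<cdot> h)" using zero_cmp_l[OF zh, of "adj (e 1)"] Sh e1 ch' by simp
    define h1 where "h1 = adj (e 1) \<cdot> h"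
    have h1d: "dom h1 = dom h" "cod h1 = A" unfolding h1_def using e1 ch' by simp_all
    have hh: "h = e 1 \<cdot> h1"
    proof (rule bp2_prod_eq[OF bp])
      show "dom h = dom h" "cod h = D" "dom (e 1 \<cdot> h1) = dom h" "cod (e 1 \<cdot> h1) = D"
        using ch' h1d e1 by simp_all
      have a: "adj (e 0) \<cdot> (e 1 \<cdot> h1) = (adj (e 0) \<cdot> e 1) \<cdot> h1" by (rule assoc') (use e0 e1 h1d in simp_all)
      have zz: "zero_mor C ((adj (e 0) \<cdot> e 1) \<cdot> h1)" using zero_cmp_r[OF e01(1)] e0 e1 h1d by simp
      have "adj (e 0) \<cdot> h = (adj (e 0) \<cdot> e 1) \<cdot> h1"
        by (rule zero_unique[OF z0 zz]) (use e0 e1 h1d ch' in simp_all)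
      thus "adj (e 0) \<cdot> h = adj (e 0) \<cdot> (e 1 \<cdot> h1)" using a by simp
      show "adj (e 1) \<cdot> h = adj (e 1) \<cdot> (e 1 \<cdot> h1)" using iso_cancel[OF ie1, of h1] h1d e1 h1_def by simp
    qed
    have "\<Sigma> \<cdot> h = \<Sigma> \<cdot> (e 1 \<cdot> h1)" using hh by simp
    also have "\<dots> = (\<Sigma> \<cdot> e 1) \<cdot> h1" by (rule assoc') (use \<Sigma> e1 h1d in simp_all)
    also have "\<dots> = h1" using \<Sigma> h1d by simp
    finally have "zero_mor C h1" using zS by simp
    hence "zero_mor C (e 1 \<cdot> h1)" using zero_cmp_l[of h1 "e 1"] h1d e1 by simp
    thus ?thesis using hh by simp
  qed
  have "H = e 0" using zero_monic_mono[OF zm _ _ _ ShH] Hd e0 Sh by simp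
  hence "adj y \<cdot> y = adj (e 1) \<cdot> e 0" using H1 by simp
  hence "zero_mor C (adj y \<cdot> y)" using e01(2) by simp
  thus ?thesis by (rule positivity)
qed

end

context phc
begin

lemma iso_cmp: assumes "isometry C f" "isometry C g" "cod f = dom g" shows "isometry C (g \<cdot> f)"
proof -
  have "adj (g \<cdot> f) \<cdot> (g \<cdot> f) = adj f \<cdot> (adj g \<cdot> (g \<cdot> f))" using assms(3) by simp
  also have "\<dots> = adj f \<cdot> f" using iso_cancel[OF assms(2) assms(3)] by simp
  also have "\<dots> = Id C (dom (g \<cdot> f))" using assms by (simp add: iso_eq)
  finally show ?thesis unfolding isometry_def .
qed

lemma ioc_ex: "\<exists>r. iso_orth_complement C a r"
  using kernel_ex[of "adj a"] unfolding iso_orth_complement_def by blast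

lemma factor:
  assumes x: "isometry C x" "dom x = A" "cod x = T"
    and t2: "isometry C t2" "dom t2 = Y" "cod t2 = T"
    and t: "isometry C t" "adj t2 \<cdot> x = t"
  shows "x = t2 \<cdot> t"
proof -
  obtain r where r: "iso_orth_complement C t2 r" using ioc_ex by blast
  note ro = ioc_props[OF r]
  have rd: "cod r = T" using ro(2) t2 by simp
  obtain S and \<kappa> :: "nat \<Rightarrow> 'm" where bpS: "orth_biproduct C {0, 1} (\<lambda>k. if k = 0 then Y else dom r) S \<kappa>"
    using binary_bp by blast
  have k0: "dom (\<kappa> 0) = Y" "cod (\<kappa> 0) = S" using bp_inj[OF bpS, of 0] by simp_all
  have k1: "dom (\<kappa> 1) = dom r" "cod (\<kappa> 1) = S" using bp_inj[OF bpS, of 1] by simp_all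
  obtain M where M: "dom M = T" "cod M = S" "adj (\<kappa> 0) \<cdot> M = adj t2" "adj (\<kappa> 1) \<cdot> M = adj r"
    using bp2_prod_ex[OF bpS, of "adj t2" T "adj r"] t2 rd by (simp, blast)
  have pk: "\<And>k. k \<in> {0::nat,1} \<Longrightarrow> k \<noteq> 0 \<Longrightarrow> k \<noteq> 1 \<Longrightarrow> zero_mor C (adj (\<kappa> k) \<cdot> M)" by auto
  have h1: "dom t2 = (if (0::nat) = 0 then Y else dom r)" using t2 by simp
  have h2: "dom r = (if (1::nat) = 0 then Y else dom r)" by simp
  have i01: "(0::nat) \<in> {0,1}" "(1::nat) \<in> {0,1}" "(0::nat) \<noteq> 1" by simp_all
  note D = decomp[OF bpS i01 t2(1) h1 t2(3) r h2 M pk]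
  have dc: "M \<cdot> t2 = \<kappa> 0" "adj M \<cdot> M = Id C T" using D(1,3) by simp_all
  have iM: "isometry C M" unfolding isometry_def using dc M by simp
  define z where "z = M \<cdot> x"
  have zd: "dom z = A" "cod z = S" unfolding z_def using M x by simp_all
  have iz: "isometry C z" unfolding z_def by (rule iso_cmp[OF x(1) iM]) (use x M in simp)
  have z0: "adj (\<kappa> 0) \<cdot> z = t"
  proof -
    have "adj (\<kappa> 0) \<cdot> z = (adj (\<kappa> 0) \<cdot> M) \<cdot> x" unfolding z_def by (rule assoc') (use M x k0 in simp_all)
    thus ?thesis using M t by simp
  qed
  define y where "y = adj (\<kappa> 1) \<cdot> z"
  have zy: "zero_mor C y" using shear[OF bpS zd iz z0 t(1)] y_def by simp
  have "dom (adj t2 \<cdot> x) = A" "cod (adj t2 \<cdot> x) = Y" using x t2 by simp_all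
  hence td: "dom t = A" "cod t = Y" using t(2) by simp_all
  have zk: "z = \<kappa> 0 \<cdot> t"
  proof (rule bp2_prod_eq[OF bpS])
    show "dom z = A" "cod z = S" "dom (\<kappa> 0 \<cdot> t) = A" "cod (\<kappa> 0 \<cdot> t) = S" using zd k0 td by simp_all
    show "adj (\<kappa> 0) \<cdot> z = adj (\<kappa> 0) \<cdot> (\<kappa> 0 \<cdot> t)"
      using z0 iso_cancel[OF bp_iso[OF bpS, of 0], of t] td k0 by simp
    have a: "adj (\<kappa> 1) \<cdot> (\<kappa> 0 \<cdot> t) = (adj (\<kappa> 1) \<cdot> \<kappa> 0) \<cdot> t" by (rule assoc') (use k0 k1 td in simp_all)
    have zz: "zero_mor C ((adj (\<kappa> 1) \<cdot> \<kappa> 0) \<cdot> t)"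
      using zero_cmp_r[OF bp_orth[OF bpS, of 1 0]] k0 k1 td by simp
    have "y = (adj (\<kappa> 1) \<cdot> \<kappa> 0) \<cdot> t"
      by (rule zero_unique[OF zy zz]) (use y_def zd k0 k1 td in simp_all)
    thus "adj (\<kappa> 1) \<cdot> z = adj (\<kappa> 1) \<cdot> (\<kappa> 0 \<cdot> t)" using a y_def by simp
  qed
  have "x = adj M \<cdot> z" unfolding z_def using iso_cancel[OF iM, of x] x M by simp
  also have "\<dots> = (adj M \<cdot> \<kappa> 0) \<cdot> t" unfolding zk by (rule assoc') (use M k0 td in simp_all)
  also have "adj M \<cdot> \<kappa> 0 = t2" using iso_cancel[OF iM, of t2] dc t2 M by simp
  finally show ?thesis .
qed

end

context phc
begin

lemma bp3_coprod_ex: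
  assumes bp: "orth_biproduct C {0::nat, 1, 2} F D e"
    and "cod a = W" "dom a = F 0" "cod b = W" "dom b = F 1" "cod c = W" "dom c = F 2"
  shows "\<exists>h. dom h = D \<and> cod h = W \<and> h \<cdot> e 0 = a \<and> h \<cdot> e 1 = b \<and> h \<cdot> e 2 = c"
proof -
  define g where "g = (\<lambda>k::nat. if k = 0 then a else if k = 1 then b else c)"
  have pre: "\<And>k. k \<in> {0, 1, 2} \<Longrightarrow> dom (g k) = F k \<and> cod (g k) = W" using assms(2-7) unfolding g_def by auto
  have "\<exists>h. dom h = D \<and> cod h = W \<and> (\<forall>k\<in>{0,1,2}. h \<cdot> e k = g k)"
    by (rule bp_coprod_ex[OF bp]) (rule pre)
  then obtain h where h: "dom h = D" "cod h = W" "\<forall>k\<in>{0,1,2}. h \<cdot> e k = g k"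
    by (elim exE conjE)
  have "h \<cdot> e 0 = a" "h \<cdot> e 1 = b" "h \<cdot> e 2 = c" using h(3) unfolding g_def by simp_all
  thus ?thesis using h(1,2) by blast
qed

lemma bp3_prod_eq:
  assumes bp: "orth_biproduct C {0::nat, 1, 2} F D e"
    and "dom h = W" "cod h = D" "dom h' = W" "cod h' = D"
    and "adj (e 0) \<cdot> h = adj (e 0) \<cdot> h'" "adj (e 1) \<cdot> h = adj (e 1) \<cdot> h'" "adj (e 2) \<cdot> h = adj (e 2) \<cdot> h'"
  shows "h = h'"
  using bp_prod_eq[OF bp assms(2-5)] assms(6-8) by blast

lemma bp3_coprod_eq:
  assumes bp: "orth_biproduct C {0::nat, 1, 2} F D e"
    and "dom h = D" "cod h = W" "dom h' = D" "cod h' = W"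
    and "h \<cdot> e 0 = h' \<cdot> e 0" "h \<cdot> e 1 = h' \<cdot> e 1" "h \<cdot> e 2 = h' \<cdot> e 2"
  shows "h = h'"
  using bp_coprod_eq[OF bp assms(2-5)] assms(6-8) by blast

lemma main:
  fixes A X Y B :: 'o and s t sp tp u v :: 'm
    and F :: "nat \<Rightarrow> 'o" and \<iota> :: "nat \<Rightarrow> 'm"
  assumes "s \<in> hom C A X" and "isometry C s"
    and "t \<in> hom C A Y" and "isometry C t"
    and "iso_orth_complement C s sp"
    and "iso_orth_complement C t tp"
    and "F 0 = Dom C sp" and "F 1 = A" and "F 2 = Dom C tp"
    and bp: "orth_biproduct C {0, 1, 2} F B \<iota>"
    and "u \<in> hom C X B"
    and "Cmp C (Adj C (\<iota> 0)) u = Adj C sp"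
    and "Cmp C (Adj C (\<iota> 1)) u = Adj C s"
    and "zero_mor C (Cmp C (Adj C (\<iota> 2)) u)"
    and "v \<in> hom C Y B"
    and "zero_mor C (Cmp C (Adj C (\<iota> 0)) v)"
    and "Cmp C (Adj C (\<iota> 1)) v = Adj C t"
    and "Cmp C (Adj C (\<iota> 2)) v = Adj C tp"
  shows "pushout_square C s t u v \<and> codilator C (Cmp C t (Adj C s)) B u v"
proof -
  have sd: "dom s = A" "cod s = X" and iss: "isometry C s" using assms(1,2) by (simp_all add: hom_iff)
  have td: "dom t = A" "cod t = Y" and it: "isometry C t" using assms(3,4) by (simp_all add: hom_iff)
  note spo = ioc_props[OF assms(5)] and tpo = ioc_props[OF assms(6)]
  have spd: "cod sp = X" using spo(2) sd by simp
  have tpd: "cod tp = Y" using tpo(2) td by simp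
  have ud: "dom u = X" "cod u = B" using assms(11) by (simp_all add: hom_iff)
  have vd: "dom v = Y" "cod v = B" using assms(15) by (simp_all add: hom_iff)
  have i0: "dom (\<iota> 0) = dom sp" "cod (\<iota> 0) = B" using bp_inj[OF bp, of 0] assms(7) by auto
  have i1: "dom (\<iota> 1) = A" "cod (\<iota> 1) = B" using bp_inj[OF bp, of 1] assms(8) by auto
  have i2: "dom (\<iota> 2) = dom tp" "cod (\<iota> 2) = B" using bp_inj[OF bp, of 2] assms(9) by auto
  have I: "(0::nat) \<in> {0,1,2}" "(1::nat) \<in> {0,1,2}" "(2::nat) \<in> {0,1,2}" "(1::nat) \<noteq> 0" "(1::nat) \<noteq> 2"
    by simp_all
  have pku: "zero_mor C (adj (\<iota> k) \<cdot> u)" if "k \<in> {0::nat,1,2}" "k \<noteq> 1" "k \<noteq> 0" for k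
  proof -
    have "k = 2" using that by auto
    thus ?thesis using assms(14) by simp
  qed
  have pkv: "zero_mor C (adj (\<iota> k) \<cdot> v)" if "k \<in> {0::nat,1,2}" "k \<noteq> 1" "k \<noteq> 2" for k
  proof -
    have "k = 0" using that by auto
    thus ?thesis using assms(16) by simp
  qed
  have f1: "dom s = F 1" "dom t = F 1" using sd td assms(8) by simp_all
  have f0: "dom sp = F 0" using assms(7) by simp
  have f2: "dom tp = F 2" using assms(9) by simp
  note du = decomp[OF bp I(2) I(1) I(4) iss f1(1) sd(2) assms(5) f0 ud assms(13) assms(12) pku]
  note dv = decomp[OF bp I(2) I(3) I(5) it f1(2) td(2) assms(6) f2 vd assms(17) assms(18) pkv]
  have cu: "cod u = B" using ud by simp
  have POx: "\<exists>!h. h \<in> hom C B (cod a) \<and> h \<cdot> u = a \<and> h \<cdot> v = b"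
    if ab: "dom a = X" "dom b = Y" "cod b = cod a" "a \<cdot> s = b \<cdot> t" for a b
  proof -
    define W where "W = cod a"
    have abd: "cod a = W" "cod b = W" using ab W_def by simp_all
    have pre: "cod (a \<cdot> sp) = W" "dom (a \<cdot> sp) = F 0" "cod (a \<cdot> s) = W" "dom (a \<cdot> s) = F 1"
      "cod (b \<cdot> tp) = W" "dom (b \<cdot> tp) = F 2"
      using ab abd spd sd td tpd f0 f1 f2 by simp_all
    obtain h where h: "dom h = B" "cod h = W" "h \<cdot> \<iota> 0 = a \<cdot> sp" "h \<cdot> \<iota> 1 = a \<cdot> s" "h \<cdot> \<iota> 2 = b \<cdot> tp"
      using bp3_coprod_ex[OF bp pre] by blast
    have hu: "h \<cdot> u = a"
    proof (rule du(4))
      show "dom (h \<cdot> u) = X" "dom a = X" "cod (h \<cdot> u) = cod a" using h ud ab abd by simp_all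
      have "(h \<cdot> u) \<cdot> s = h \<cdot> (u \<cdot> s)" by (rule assoc) (use h ud sd in simp_all)
      thus "(h \<cdot> u) \<cdot> s = a \<cdot> s" using du(1) h by simp
      have "(h \<cdot> u) \<cdot> sp = h \<cdot> (u \<cdot> sp)" by (rule assoc) (use h ud spd in simp_all)
      thus "(h \<cdot> u) \<cdot> sp = a \<cdot> sp" using du(2) h by simp
    qed
    have hv: "h \<cdot> v = b"
    proof (rule dv(4))
      show "dom (h \<cdot> v) = Y" "dom b = Y" "cod (h \<cdot> v) = cod b" using h vd ab abd by simp_all
      have "(h \<cdot> v) \<cdot> t = h \<cdot> (v \<cdot> t)" by (rule assoc) (use h vd td in simp_all)
      thus "(h \<cdot> v) \<cdot> t = b \<cdot> t" using dv(1) h ab(4) by simp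
      have "(h \<cdot> v) \<cdot> tp = h \<cdot> (v \<cdot> tp)" by (rule assoc) (use h vd tpd in simp_all)
      thus "(h \<cdot> v) \<cdot> tp = b \<cdot> tp" using dv(2) h by simp
    qed
    have uniq: "h' = h" if h': "h' \<in> hom C B (cod a)" "h' \<cdot> u = a" "h' \<cdot> v = b" for h'
    proof (rule bp3_coprod_eq[OF bp])
      have h'd: "dom h' = B" "cod h' = W" using h' abd by (simp_all add: hom_iff)
      show "dom h' = B" "cod h' = W" "dom h = B" "cod h = W" using h'd h by simp_all
      have "h' \<cdot> \<iota> 0 = h' \<cdot> (u \<cdot> sp)" using du(2) by simp
      also have "\<dots> = (h' \<cdot> u) \<cdot> sp" by (rule assoc') (use h'd ud spd in simp_all)
      finally show "h' \<cdot> \<iota> 0 = h \<cdot> \<iota> 0" using h' h by simp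
      have "h' \<cdot> \<iota> 1 = h' \<cdot> (u \<cdot> s)" using du(1) by simp
      also have "\<dots> = (h' \<cdot> u) \<cdot> s" by (rule assoc') (use h'd ud sd in simp_all)
      finally show "h' \<cdot> \<iota> 1 = h \<cdot> \<iota> 1" using h' h by simp
      have "h' \<cdot> \<iota> 2 = h' \<cdot> (v \<cdot> tp)" using dv(2) by simp
      also have "\<dots> = (h' \<cdot> v) \<cdot> tp" by (rule assoc') (use h'd vd tpd in simp_all)
      finally show "h' \<cdot> \<iota> 2 = h \<cdot> \<iota> 2" using h' h by simp
    qed
    have "h \<in> hom C B (cod a)" using h abd by (simp add: hom_iff)
    thus ?thesis using hu hv uniq by blast
  qed
  have PO: "pushout_square C s t u v"
    unfolding pushout_square_def
  proof (intro conjI allI impI)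
    show "Dom C s = Dom C t" "Cod C s = Dom C u" "Cod C t = Dom C v" "Cod C u = Cod C v"
      using sd td ud vd by simp_all
    show "u \<cdot> s = v \<cdot> t" using du(1) dv(1) by simp
    fix a b assume "Dom C a = Cod C s \<and> Dom C b = Cod C t \<and> Cod C a = Cod C b \<and> a \<cdot> s = b \<cdot> t"
    hence "dom a = X" "dom b = Y" "cod b = cod a" "a \<cdot> s = b \<cdot> t" using sd td by auto
    thus "\<exists>!h. h \<in> hom C (Cod C u) (Cod C a) \<and> h \<cdot> u = a \<and> h \<cdot> v = b" using POx cu by simp
  qed
  define f0 where "f0 = t \<cdot> adj s"
  have f0d: "dom f0 = X" "cod f0 = Y" unfolding f0_def using sd td by simp_all
  have iu: "isometry C u" unfolding isometry_def using du(3) ud by simp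
  have iv: "isometry C v" unfolding isometry_def using dv(3) vd by simp
  have vi1: "adj v \<cdot> \<iota> 1 = t"
  proof -
    have "adj (adj (\<iota> 1) \<cdot> v) = adj v \<cdot> adj (adj (\<iota> 1))" by (rule adj_cmp) (use vd i1 in simp)
    thus ?thesis using assms(17) by simp
  qed
  have vi0: "zero_mor C (adj v \<cdot> \<iota> 0)"
  proof -
    have "adj (adj (\<iota> 0) \<cdot> v) = adj v \<cdot> adj (adj (\<iota> 0))" by (rule adj_cmp) (use vd i0 in simp)
    thus ?thesis using zero_adj[OF assms(16)] by simp
  qed
  have vu: "adj v \<cdot> u = f0"
  proof (rule du(4))
    show "dom (adj v \<cdot> u) = X" "dom f0 = X" "cod (adj v \<cdot> u) = cod f0" using ud vd f0d by simp_all
    have "(adj v \<cdot> u) \<cdot> s = adj v \<cdot> (u \<cdot> s)" by (rule assoc) (use ud vd sd in simp_all)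
    also have "\<dots> = t" using du(1) vi1 by simp
    also have "\<dots> = t \<cdot> (adj s \<cdot> s)" using iss sd td by (simp add: iso_eq)
    also have "\<dots> = f0 \<cdot> s" unfolding f0_def by (rule assoc') (use sd td in simp_all)
    finally show "(adj v \<cdot> u) \<cdot> s = f0 \<cdot> s" .
    have "(adj v \<cdot> u) \<cdot> sp = adj v \<cdot> (u \<cdot> sp)" by (rule assoc) (use ud vd spd in simp_all)
    also have "\<dots> = adj v \<cdot> \<iota> 0" using du(2) by simp
    finally have z1: "zero_mor C ((adj v \<cdot> u) \<cdot> sp)" using vi0 by simp
    have "f0 \<cdot> sp = t \<cdot> (adj s \<cdot> sp)" unfolding f0_def by (rule assoc) (use sd td spd in simp_all)
    moreover have "zero_mor C (t \<cdot> (adj s \<cdot> sp))" using zero_cmp_l[OF spo(3), of t] sd td spd by simp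
    ultimately have z2: "zero_mor C (f0 \<cdot> sp)" by simp
    show "(adj v \<cdot> u) \<cdot> sp = f0 \<cdot> sp"
      by (rule zero_unique[OF z1 z2]) (use ud vd spd f0d in simp_all)
  qed
  have CD: "codilation C f0 B u v" unfolding codilation_def
    using ud vd f0d iu iv vu by (simp add: hom_iff)
  have UN: "\<exists>!w. w \<in> hom C B T \<and> isometry C w \<and> w \<cdot> u = t1 \<and> w \<cdot> v = t2"
    if cd: "codilation C f0 T t1 t2" for T t1 t2
  proof -
    have t1: "dom t1 = X" "cod t1 = T" "isometry C t1" and t2: "dom t2 = Y" "cod t2 = T" "isometry C t2"
      and t21: "adj t2 \<cdot> t1 = f0"
      using cd f0d unfolding codilation_def hom_iff by auto
    have x: "isometry C (t1 \<cdot> s)" by (rule iso_cmp[OF iss t1(3)]) (use sd t1 in simp)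
    have "adj t2 \<cdot> (t1 \<cdot> s) = (adj t2 \<cdot> t1) \<cdot> s" by (rule assoc') (use sd t1 t2 in simp_all)
    also have "\<dots> = t \<cdot> (adj s \<cdot> s)" unfolding t21 f0_def by (rule assoc) (use sd td in simp_all)
    also have "\<dots> = t" using iss sd td by (simp add: iso_eq)
    finally have xt: "adj t2 \<cdot> (t1 \<cdot> s) = t" .
    have fac: "t1 \<cdot> s = t2 \<cdot> t"
      by (rule factor[OF x _ _ t2(3) t2(1,2) it xt]) (use sd t1 in simp_all)
    obtain w where w: "w \<in> hom C B T" "w \<cdot> u = t1" "w \<cdot> v = t2"
      and wu: "\<And>w'. w' \<in> hom C B (cod t1) \<Longrightarrow> w' \<cdot> u = t1 \<Longrightarrow> w' \<cdot> v = t2 \<Longrightarrow> w' = w"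
      using POx[OF t1(1) t2(1) _ fac] t1 t2 by (metis)
    have wd: "dom w = B" "cod w = T" using w(1) by (simp_all add: hom_iff)
    have wi0: "w \<cdot> \<iota> 0 = t1 \<cdot> sp"
    proof -
      have "w \<cdot> \<iota> 0 = w \<cdot> (u \<cdot> sp)" using du(2) by simp
      also have "\<dots> = (w \<cdot> u) \<cdot> sp" by (rule assoc') (use wd ud spd in simp_all)
      finally show ?thesis using w(2) by simp
    qed
    have wi1: "w \<cdot> \<iota> 1 = t1 \<cdot> s"
    proof -
      have "w \<cdot> \<iota> 1 = w \<cdot> (u \<cdot> s)" using du(1) by simp
      also have "\<dots> = (w \<cdot> u) \<cdot> s" by (rule assoc') (use wd ud sd in simp_all)
      finally show ?thesis using w(2) by simp
    qed
    have wi2: "w \<cdot> \<iota> 2 = t2 \<cdot> tp"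
    proof -
      have "w \<cdot> \<iota> 2 = w \<cdot> (v \<cdot> tp)" using dv(2) by simp
      also have "\<dots> = (w \<cdot> v) \<cdot> tp" by (rule assoc') (use wd vd tpd in simp_all)
      finally show ?thesis using w(3) by simp
    qed
    have aw: "adj (\<iota> k) \<cdot> (adj w \<cdot> g) = adj (w \<cdot> \<iota> k) \<cdot> g" if "cod (\<iota> k) = B" "cod g = T" for k g
    proof -
      have "adj (w \<cdot> \<iota> k) = adj (\<iota> k) \<cdot> adj w" by (rule adj_cmp) (use that wd in simp)
      moreover have "(adj (\<iota> k) \<cdot> adj w) \<cdot> g = adj (\<iota> k) \<cdot> (adj w \<cdot> g)" by (rule assoc) (use that wd in simp_all)
      ultimately show ?thesis by simp
    qed
    have at: "adj (t1 \<cdot> g) \<cdot> t1 = adj g" if "cod g = X" for g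
    proof -
      have "adj (t1 \<cdot> g) = adj g \<cdot> adj t1" by (rule adj_cmp) (use that t1 in simp)
      moreover have "(adj g \<cdot> adj t1) \<cdot> t1 = adj g \<cdot> (adj t1 \<cdot> t1)" by (rule assoc) (use that t1 in simp_all)
      moreover have "adj t1 \<cdot> t1 = Id C X" using t1 by (simp add: iso_eq)
      ultimately show ?thesis using that by simp
    qed
    have at2: "adj (t2 \<cdot> g) \<cdot> t2 = adj g" if "cod g = Y" for g
    proof -
      have "adj (t2 \<cdot> g) = adj g \<cdot> adj t2" by (rule adj_cmp) (use that t2 in simp)
      moreover have "(adj g \<cdot> adj t2) \<cdot> t2 = adj g \<cdot> (adj t2 \<cdot> t2)" by (rule assoc) (use that t2 in simp_all)
      moreover have "adj t2 \<cdot> t2 = Id C Y" using t2 by (simp add: iso_eq)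
      ultimately show ?thesis using that by simp
    qed
    have wt1: "adj w \<cdot> t1 = u"
    proof (rule bp3_prod_eq[OF bp])
      show "dom (adj w \<cdot> t1) = X" "cod (adj w \<cdot> t1) = B" "dom u = X" "cod u = B" using wd t1 ud by simp_all
      show "adj (\<iota> 0) \<cdot> (adj w \<cdot> t1) = adj (\<iota> 0) \<cdot> u"
        using aw[OF i0(2) t1(2)] wi0 at[OF spd] assms(12) by simp
      show "adj (\<iota> 1) \<cdot> (adj w \<cdot> t1) = adj (\<iota> 1) \<cdot> u"
        using aw[OF i1(2) t1(2)] wi1 at[OF sd(2)] assms(13) by simp
      have "adj (\<iota> 2) \<cdot> (adj w \<cdot> t1) = adj (t2 \<cdot> tp) \<cdot> t1" using aw[OF i2(2) t1(2)] wi2 by simp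
      also have "\<dots> = (adj tp \<cdot> adj t2) \<cdot> t1" using t2 tpd by simp
      also have "\<dots> = adj tp \<cdot> f0" using t21 t2 tpd t1 by simp
      also have "\<dots> = (adj tp \<cdot> t) \<cdot> adj s" unfolding f0_def by (rule assoc') (use td tpd sd in simp_all)
      finally have z1: "zero_mor C (adj (\<iota> 2) \<cdot> (adj w \<cdot> t1))"
        using zero_cmp_r[OF tpo(4), of "adj s"] td sd tpd by simp
      show "adj (\<iota> 2) \<cdot> (adj w \<cdot> t1) = adj (\<iota> 2) \<cdot> u"
        by (rule zero_unique[OF z1 assms(14)]) (use wd t1 ud i2 in simp_all)
    qed
    have t12: "adj t1 \<cdot> t2 = s \<cdot> adj t"
    proof -
      have "adj (adj t2 \<cdot> t1) = adj t1 \<cdot> t2" by (subst adj_cmp) (use t1 t2 in simp_all)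
      moreover have "adj f0 = s \<cdot> adj t" unfolding f0_def by (subst adj_cmp) (use sd td in simp_all)
      ultimately show ?thesis using t21 by simp
    qed
    have wt2: "adj w \<cdot> t2 = v"
    proof (rule bp3_prod_eq[OF bp])
      show "dom (adj w \<cdot> t2) = Y" "cod (adj w \<cdot> t2) = B" "dom v = Y" "cod v = B" using wd t2 vd by simp_all
      have "adj (\<iota> 0) \<cdot> (adj w \<cdot> t2) = adj (t1 \<cdot> sp) \<cdot> t2" using aw[OF i0(2) t2(2)] wi0 by simp
      also have "\<dots> = (adj sp \<cdot> adj t1) \<cdot> t2" using t1 spd by simp
      also have "\<dots> = adj sp \<cdot> (s \<cdot> adj t)" using t12 t1 t2 spd by simp
      also have "\<dots> = (adj sp \<cdot> s) \<cdot> adj t" by (rule assoc') (use td spd sd in simp_all)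
      finally have z1: "zero_mor C (adj (\<iota> 0) \<cdot> (adj w \<cdot> t2))"
        using zero_cmp_r[OF spo(4), of "adj t"] td sd spd by simp
      show "adj (\<iota> 0) \<cdot> (adj w \<cdot> t2) = adj (\<iota> 0) \<cdot> v"
        by (rule zero_unique[OF z1 assms(16)]) (use wd t2 vd i0 in simp_all)
      have "adj (\<iota> 1) \<cdot> (adj w \<cdot> t2) = adj (t1 \<cdot> s) \<cdot> t2" using aw[OF i1(2) t2(2)] wi1 by simp
      also have "\<dots> = (adj s \<cdot> adj t1) \<cdot> t2" using t1 sd by simp
      also have "\<dots> = adj s \<cdot> (s \<cdot> adj t)" using t12 t1 t2 sd by simp
      also have "\<dots> = adj t" using iso_cancel[OF iss, of "adj t"] sd td by simp
      finally show "adj (\<iota> 1) \<cdot> (adj w \<cdot> t2) = adj (\<iota> 1) \<cdot> v" using assms(17) by simp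
      show "adj (\<iota> 2) \<cdot> (adj w \<cdot> t2) = adj (\<iota> 2) \<cdot> v"
        using aw[OF i2(2) t2(2)] wi2 at2[OF tpd] assms(18) by simp
    qed
    have "adj w \<cdot> w = Id C B"
    proof (rule bp3_coprod_eq[OF bp])
      show "dom (adj w \<cdot> w) = B" "cod (adj w \<cdot> w) = B" "dom (Id C B) = B" "cod (Id C B) = B" using wd by simp_all
      have "(adj w \<cdot> w) \<cdot> \<iota> 0 = adj w \<cdot> (t1 \<cdot> sp)" using wi0 wd i0 by simp
      also have "\<dots> = (adj w \<cdot> t1) \<cdot> sp" by (rule assoc') (use wd t1 spd in simp_all)
      also have "\<dots> = Id C B \<cdot> \<iota> 0" using wt1 du(2) i0 by simp
      finally show "(adj w \<cdot> w) \<cdot> \<iota> 0 = Id C B \<cdot> \<iota> 0" .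
      have "(adj w \<cdot> w) \<cdot> \<iota> 1 = adj w \<cdot> (t1 \<cdot> s)" using wi1 wd i1 by simp
      also have "\<dots> = (adj w \<cdot> t1) \<cdot> s" by (rule assoc') (use wd t1 sd in simp_all)
      also have "\<dots> = Id C B \<cdot> \<iota> 1" using wt1 du(1) i1 by simp
      finally show "(adj w \<cdot> w) \<cdot> \<iota> 1 = Id C B \<cdot> \<iota> 1" .
      have "(adj w \<cdot> w) \<cdot> \<iota> 2 = adj w \<cdot> (t2 \<cdot> tp)" using wi2 wd i2 by simp
      also have "\<dots> = (adj w \<cdot> t2) \<cdot> tp" by (rule assoc') (use wd t2 tpd in simp_all)
      also have "\<dots> = Id C B \<cdot> \<iota> 2" using wt2 dv(2) i2 by simp
      finally show "(adj w \<cdot> w) \<cdot> \<iota> 2 = Id C B \<cdot> \<iota> 2" .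
    qed
    hence iw: "isometry C w" unfolding isometry_def using wd by simp
    show ?thesis using w wu iw t1 by blast
  qed
  show ?thesis using PO CD UN unfolding codilator_def f0_def by blast
qed

end

theorem proposition7p20:
  fixes C :: "('o, 'm) scat"
    and A X Y B :: 'o and s t sp tp u v :: 'm
    and F :: "nat \<Rightarrow> 'o" and \<iota> :: "nat \<Rightarrow> 'm"
  assumes "pre_hilbert_star_category C"
    and "s \<in> hom C A X" and "isometry C s"
    and "t \<in> hom C A Y" and "isometry C t"
    and "iso_orth_complement C s sp"
    and "iso_orth_complement C t tp"
    and "F 0 = Dom C sp" and "F 1 = A" and "F 2 = Dom C tp"
    and "orth_biproduct C {0, 1, 2} F B \<iota>"
    and "u \<in> hom C X B"
    and "Cmp C (Adj C (\<iota> 0)) u = Adj C sp"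
    and "Cmp C (Adj C (\<iota> 1)) u = Adj C s"
    and "zero_mor C (Cmp C (Adj C (\<iota> 2)) u)"
    and "v \<in> hom C Y B"
    and "zero_mor C (Cmp C (Adj C (\<iota> 0)) v)"
    and "Cmp C (Adj C (\<iota> 1)) v = Adj C t"
    and "Cmp C (Adj C (\<iota> 2)) v = Adj C tp"
  shows "pushout_square C s t u v \<and> codilator C (Cmp C t (Adj C s)) B u v"
proof -
  interpret phc C by unfold_locales (rule assms(1))
  show ?thesis by (rule main[OF assms(2-19)])
qed

end
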